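(* Let $S$ be a ring with $1$ and $R$ a subring of $S$ with $1\in R$. Suppose there is a unit $x\in S$ such that $x+1$ is also a unit and $x^{-1}Rx=(x+1)^{-1}R(x+1)=R$. Then either $(x+1)^{-1}\in R$, or $I_{x+1}:=R\cap(x+1)R$ is an ideal of $R$ with $I_{x+1}\neq R$ and $x^{-1}ux-u\in I_{x+1}$ for all $u\in R$. *)

theory Defs
  imports "HOL-Algebra.Algebra"
begin

end

theory Submission
  imports Defs
begin

lemma (in ring) t1: assumes "p \<in> carrier R" "w \<in> carrier R" "u \<in> carrier R" shows "(p \<oplus> w) \<ominus> (p \<oplus> u) = w \<ominus> u"
proof -
  have "(p \<oplus> w) \<ominus> (p \<oplus> u) = p \<oplus> (w \<oplus> (\<ominus> p \<oplus> \<ominus> u))"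
    using assms by (simp add: a_minus_def minus_add a_assoc)
  also have "\<dots> = p \<oplus> (\<ominus> p \<oplus> (w \<oplus> \<ominus> u))" using assms by (simp add: a_lcomm)
  also have "\<dots> = w \<ominus> u" using assms by (simp add: r_neg2 a_minus_def)
  finally show ?thesis .
qed

theorem lemma2p4:
  fixes S (structure) and R :: "'a set" and x :: 'a
  assumes "ring S"
    and "subring R S"
    and "x \<in> Units S"
    and "x \<oplus> \<one> \<in> Units S"
    and "(\<lambda>r. inv x \<otimes> r \<otimes> x) ` R = R"
    and "(\<lambda>r. inv (x \<oplus> \<one>) \<otimes> r \<otimes> (x \<oplus> \<one>)) ` R = R"
  shows "inv (x \<oplus> \<one>) \<in> R \<or>
    (ideal (R \<inter> {(x \<oplus> \<one>) \<otimes> r | r. r \<in> R}) (S\<lparr>carrier := R\<rparr>)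
     \<and> R \<inter> {(x \<oplus> \<one>) \<otimes> r | r. r \<in> R} \<noteq> R
     \<and> (\<forall>u\<in>R. inv x \<otimes> u \<otimes> x \<ominus> u \<in> R \<inter> {(x \<oplus> \<one>) \<otimes> r | r. r \<in> R}))"
proof (cases "inv (x \<oplus> \<one>) \<in> R")
  case True thus ?thesis by simp
next
  case False
  interpret ring S by fact
  define y where "y = x \<oplus> \<one>"
  define I where "I = R \<inter> {y \<otimes> r | r. r \<in> R}"
  have Rc: "R \<subseteq> carrier S" using subringE(1)[OF assms(2)] .
  have xc: "x \<in> carrier S" "inv x \<in> carrier S" using assms(3) by auto
  have yU: "y \<in> Units S" using assms(4) y_def by simp
  have yc: "y \<in> carrier S" "inv y \<in> carrier S" using yU by auto
  have yinv1: "y \<otimes> inv y = \<one>" "inv y \<otimes> y = \<one>" using yU by auto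
  have xinv1: "x \<otimes> inv x = \<one>" "inv x \<otimes> x = \<one>" using assms(3) by auto
  have cy: "inv y \<otimes> a \<otimes> y \<in> R" if "a \<in> R" for a
    using assms(6) that y_def by blast
  have cx: "inv x \<otimes> a \<otimes> x \<in> R" if "a \<in> R" for a
    using assms(5) that by blast
  have Rmul: "a \<otimes> b \<in> R" if "a \<in> R" "b \<in> R" for a b using subringE(6)[OF assms(2)] that .
  have Radd: "a \<oplus> b \<in> R" if "a \<in> R" "b \<in> R" for a b using subringE(7)[OF assms(2)] that .
  have Rneg: "\<ominus> a \<in> R" if "a \<in> R" for a using subringE(5)[OF assms(2)] that .
  have R1: "\<one> \<in> R" and R0: "\<zero> \<in> R" using subringE[OF assms(2)] by auto
  have Imem: "y \<otimes> r \<in> I" if "r \<in> R" "y \<otimes> r \<in> R" for r using that I_def by blast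
  have subI: "subgroup I (add_monoid S)"
  proof (rule add.subgroupI)
    show "I \<subseteq> carrier S" using Rc I_def by auto
    have "y \<otimes> \<zero> = \<zero>" using yc by simp
    hence "\<zero> \<in> I" using R0 Imem by metis
    thus "I \<noteq> {}" by blast
    fix a assume "a \<in> I"
    then obtain r where r: "r \<in> R" "a = y \<otimes> r" "a \<in> R" using I_def by blast
    have "\<ominus> a = y \<otimes> (\<ominus> r)" using r yc Rc by (simp add: r_minus subsetD)
    thus "\<ominus> a \<in> I"
      using r Rneg Imem by metis
  next
    fix a b assume "a \<in> I" "b \<in> I"
    then obtain r s where r: "r \<in> R" "a = y \<otimes> r" "a \<in> R" "s \<in> R" "b = y \<otimes> s" "b \<in> R"
      using I_def by blast
    have "a \<oplus> b = y \<otimes> (r \<oplus> s)" using r yc Rc by (simp add: r_distr subsetD)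
    thus "a \<oplus> b \<in> I" using r Radd Imem by metis
  qed
  have subR: "subgroup R (add_monoid S)" using subring.axioms(1)[OF assms(2)] .
  have sub2: "subgroup I ((add_monoid S)\<lparr>carrier := R\<rparr>)"
    using add.subgroup_incl[OF subI subR] I_def by auto
  have ideal: "ideal I (S\<lparr>carrier := R\<rparr>)"
  proof (rule idealI)
    show "ring (S\<lparr>carrier := R\<rparr>)" using subring_is_ring[OF assms(2)] .
    show "subgroup I (add_monoid (S\<lparr>carrier := R\<rparr>))" using sub2 by simp
  next
    fix a z assume a: "a \<in> I" and z: "z \<in> carrier (S\<lparr>carrier := R\<rparr>)"
    then obtain r where r: "r \<in> R" "a = y \<otimes> r" "a \<in> R" using I_def by blast
    have zR: "z \<in> R" using z by simp
    have zc: "z \<in> carrier S" using zR Rc by auto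
    have rc: "r \<in> carrier S" using r Rc by auto
    have "y \<otimes> ((inv y \<otimes> z \<otimes> y) \<otimes> r) = (y \<otimes> inv y) \<otimes> z \<otimes> y \<otimes> r"
      using yc zc rc by (simp add: m_assoc)
    also have "\<dots> = z \<otimes> a" using yc zc rc r yinv1 by (simp add: m_assoc)
    finally have "z \<otimes> a = y \<otimes> ((inv y \<otimes> z \<otimes> y) \<otimes> r)" by simp
    thus "z \<otimes>\<^bsub>S\<lparr>carrier := R\<rparr>\<^esub> a \<in> I"
    proof -
      have "z \<otimes> a \<in> R" using Rmul zR r by simp
      moreover have "(inv y \<otimes> z \<otimes> y) \<otimes> r \<in> R" using Rmul cy zR r by simp
      ultimately have "z \<otimes> a \<in> I" using Imem \<open>z \<otimes> a = _\<close> by metis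
      thus ?thesis by simp
    qed
  next
    fix a z assume a: "a \<in> I" and z: "z \<in> carrier (S\<lparr>carrier := R\<rparr>)"
    then obtain r where r: "r \<in> R" "a = y \<otimes> r" "a \<in> R" using I_def by blast
    have zR: "z \<in> R" using z by simp
    have "a \<otimes> z = y \<otimes> (r \<otimes> z)" using r zR Rc yc by (simp add: m_assoc subsetD)
    thus "a \<otimes>\<^bsub>S\<lparr>carrier := R\<rparr>\<^esub> z \<in> I"
    proof -
      have "a \<otimes> z \<in> R" using Rmul zR r by simp
      moreover have "r \<otimes> z \<in> R" using Rmul zR r by simp
      ultimately have "a \<otimes> z \<in> I" using Imem \<open>a \<otimes> z = _\<close> by metis
      thus ?thesis by simp
    qed
  qed
  have neq: "I \<noteq> R"
  proof
    assume "I = R"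
    then obtain r where r: "r \<in> R" "\<one> = y \<otimes> r" using R1 I_def by blast
    have rc: "r \<in> carrier S" using r Rc by auto
    have "inv y = inv y \<otimes> (y \<otimes> r)" using r(2)[symmetric] yc by simp
    also have "\<dots> = r" using yc rc yinv1 by (simp add: m_assoc[symmetric])
    finally have "inv y \<in> R" using r(1) by simp
    thus False using False y_def by simp
  qed
  have third: "inv x \<otimes> u \<otimes> x \<ominus> u \<in> I" if u: "u \<in> R" for u
  proof -
    define w where "w = inv x \<otimes> u \<otimes> x"
    define u' where "u' = inv y \<otimes> u \<otimes> y"
    have wR: "w \<in> R" using cx u w_def by simp
    have u'R: "u' \<in> R" using cy u u'_def by simp
    have uc: "u \<in> carrier S" using u Rc by auto
    have wc: "w \<in> carrier S" using wR Rc by auto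
    have u'c: "u' \<in> carrier S" using u'R Rc by auto
    have xw: "x \<otimes> w = u \<otimes> x"
    proof -
      have "x \<otimes> w = (x \<otimes> inv x) \<otimes> u \<otimes> x" using w_def xc uc by (simp add: m_assoc)
      thus ?thesis using xinv1 uc xc by simp
    qed
    have yu': "y \<otimes> u' = u \<otimes> y"
    proof -
      have "y \<otimes> u' = (y \<otimes> inv y) \<otimes> u \<otimes> y" using u'_def yc uc by (simp add: m_assoc)
      thus ?thesis using yinv1 uc yc by simp
    qed
    have "y \<otimes> (w \<ominus> u') = y \<otimes> w \<ominus> u \<otimes> y" using yc wc u'c yu' by (simp add: a_minus_def r_distr r_minus)
    also have "\<dots> = (x \<otimes> w \<oplus> w) \<ominus> (u \<otimes> x \<oplus> u)"
      using y_def xc wc uc by (simp add: l_distr r_distr)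
    also have "\<dots> = w \<ominus> u" using xw xc wc uc t1[of "u \<otimes> x" w u] by simp
    finally have eq: "w \<ominus> u = y \<otimes> (w \<ominus> u')" by simp
    have "w \<ominus> u \<in> R" using wR u Radd Rneg by (simp add: a_minus_def)
    moreover have "w \<ominus> u' \<in> R" using wR u'R Radd Rneg by (simp add: a_minus_def)
    ultimately show ?thesis using eq Imem w_def by metis
  qed
  show ?thesis using ideal neq third unfolding I_def y_def by blast
qed

end
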